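(* For all $m\in\mathbb{N}$, $\delta\in(0,1)$ and $\boldsymbol{\mu}\in\Delta_\mathbb{N}$, with $\boldsymbol{X}\sim\boldsymbol{\mu}^m$, with probability at least $1-\delta$, $$\|\widehat{\boldsymbol{\mu}}_m-\boldsymbol{\mu}\|_{TV}\ge\frac12\hat{\mathfrak{R}}_m(\boldsymbol{X})-3\sqrt{\frac{\log(2/\delta)}{m}}.$$
   Context: $\Delta_\mathbb{N}$ is the set of probability distributions on $\mathbb{N}=\{1,2,\dots\}$; $\widehat{\boldsymbol{\mu}}_m(i)=\frac1m\sum_{t=1}^m\mathbb{I}\{X_t=i\}$; $\|\boldsymbol{\mu}-\boldsymbol{\nu}\|_{TV}=\frac12\sum_i|\boldsymbol{\mu}(i)-\boldsymbol{\nu}(i)|$. $\hat{\mathfrak{R}}_m(\boldsymbol{X})=\mathbb{E}_{\boldsymbol{\sigma}}\big[\sup_{f:\mathbb{N}\to\{0,1\}}\frac1m\sum_{t=1}^m\sigma_tf(X_t)\big]$ with $\boldsymbol{\sigma}$ uniform on $\{-1,1\}^m$. $\log$ is natural. *)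

theory Defs
  imports "HOL-Probability.Probability"
begin

text \<open>Sample X = (X_1,...,X_m) is represented as a function on indices {..<m}
  (index t corresponds to X_(t+1)); values outside {..<m} are the default 0.\<close>

definition sample_pmf :: "nat \<Rightarrow> nat pmf \<Rightarrow> (nat \<Rightarrow> nat) pmf" where
  "sample_pmf m \<mu> = Pi_pmf {..<m} 0 (\<lambda>_. \<mu>)"

definition emp_dist :: "nat \<Rightarrow> (nat \<Rightarrow> nat) \<Rightarrow> nat \<Rightarrow> real" where
  "emp_dist m X i = (1 / real m) * real (card {t \<in> {..<m}. X t = i})"

definition tv_dist :: "(nat \<Rightarrow> real) \<Rightarrow> (nat \<Rightarrow> real) \<Rightarrow> real" where
  "tv_dist p q = (1/2) * (\<Sum>\<^sub>\<infinity> i. \<bar>p i - q i\<bar>)"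

definition emp_rademacher :: "nat \<Rightarrow> (nat \<Rightarrow> nat) \<Rightarrow> real" where
  "emp_rademacher m X =
     (1 / 2 ^ m) * (\<Sum>\<sigma> \<in> PiE {..<m} (\<lambda>_. {-1, 1::real}).
        (SUP f \<in> {f :: nat \<Rightarrow> real. \<forall>x. f x \<in> {0, 1}}.
           (1 / real m) * (\<Sum>t<m. \<sigma> t * f (X t))))"

end

theory Submission
  imports Defs
begin



lemma integral_bind_pmf_bounded:
  fixes f :: "'b \<Rightarrow> real"
  assumes "\<And>x. \<bar>f x\<bar> \<le> B"
  shows "measure_pmf.expectation (bind_pmf M N) f = measure_pmf.expectation M (\<lambda>x. measure_pmf.expectation (N x) f)"
  unfolding measure_pmf_bind
  by (rule integral_bind[where K="count_space UNIV" and B=B and B'=1])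
     (auto intro: assms measure_pmf.prob_space_axioms simp: measure_pmf_in_subprob_algebra prob_space_imp_subprob_space measure_pmf.finite_measure_axioms)

lemma integrable_bounded_pmf:
  fixes f :: "'b \<Rightarrow> real"
  assumes "\<And>x. \<bar>f x\<bar> \<le> B"
  shows "integrable (measure_pmf M) f"
  by (rule measure_pmf.integrable_const_bound[where B=B]) (auto intro: assms)

lemma E_Pi_insert:
  fixes F :: "('a \<Rightarrow> 'b) \<Rightarrow> real"
  assumes "finite A" "x \<notin> A" "\<And>f. \<bar>F f\<bar> \<le> B"
  shows "measure_pmf.expectation (Pi_pmf (insert x A) d p) F =
     measure_pmf.expectation (p x) (\<lambda>y. measure_pmf.expectation (Pi_pmf A d p) (\<lambda>f. F (f(x:=y))))"
proof -
  have "measure_pmf.expectation (Pi_pmf (insert x A) d p) F =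
     measure_pmf.expectation (p x) (\<lambda>y. measure_pmf.expectation (bind_pmf (Pi_pmf A d p) (\<lambda>f. return_pmf (f(x := y)))) F)"
    unfolding Pi_pmf_insert'[OF assms(1,2)]
    by (rule integral_bind_pmf_bounded[where B=B]) (rule assms)
  also have "\<dots> = measure_pmf.expectation (p x) (\<lambda>y. measure_pmf.expectation (Pi_pmf A d p) (\<lambda>f. F (f(x:=y))))"
    by (subst integral_bind_pmf_bounded[where B=B]) (auto intro: assms)
  finally show ?thesis .
qed




lemma fubini_pmf:
  fixes G :: "'a \<Rightarrow> 'b \<Rightarrow> real"
  assumes "\<And>y f. \<bar>G y f\<bar> \<le> B"
  shows "measure_pmf.expectation p (\<lambda>y. measure_pmf.expectation q (\<lambda>f. G y f)) =
         measure_pmf.expectation q (\<lambda>f. measure_pmf.expectation p (\<lambda>y. G y f))"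
proof -
  have B2: "\<bar>case_prod G z\<bar> \<le> B" for z by (cases z) (simp add: assms)
  have key: "measure_pmf.expectation (bind_pmf p (\<lambda>y. bind_pmf q (\<lambda>f. return_pmf (y,f)))) (case_prod G)
     = measure_pmf.expectation p (\<lambda>y. measure_pmf.expectation q (\<lambda>f. G y f))"
    if "\<And>z. \<bar>case_prod G z\<bar> \<le> B"
    for p :: "'c pmf" and q :: "'d pmf" and G :: "'c \<Rightarrow> 'd \<Rightarrow> real" and B
  proof -
    have "measure_pmf.expectation (bind_pmf p (\<lambda>y. bind_pmf q (\<lambda>f. return_pmf (y,f)))) (case_prod G)
       = measure_pmf.expectation p (\<lambda>y. measure_pmf.expectation (bind_pmf q (\<lambda>f. return_pmf (y,f))) (case_prod G))"
      by (rule integral_bind_pmf_bounded[where B=B]) (rule that)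
    also have "\<dots> = measure_pmf.expectation p (\<lambda>y. measure_pmf.expectation q (\<lambda>f. G y f))"
      using that by (subst integral_bind_pmf_bounded[where B=B]) (auto simp: expectation_return_pmf)
    finally show ?thesis .
  qed
  have B3: "\<bar>case_prod (\<lambda>f y. G y f) z\<bar> \<le> B" for z by (cases z) (simp add: assms)
  have "measure_pmf.expectation p (\<lambda>y. measure_pmf.expectation q (\<lambda>f. G y f)) =
        measure_pmf.expectation (bind_pmf p (\<lambda>y. bind_pmf q (\<lambda>f. return_pmf (y,f)))) (case_prod G)"
    by (rule key[symmetric]) (rule B2)
  also have "bind_pmf p (\<lambda>y. bind_pmf q (\<lambda>f. return_pmf (y,f))) = map_pmf (\<lambda>(a,b). (b,a)) (bind_pmf q (\<lambda>f. bind_pmf p (\<lambda>y. return_pmf (f,y))))"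
    by (subst bind_commute_pmf) (simp add: map_bind_pmf)
  also have "measure_pmf.expectation \<dots> (case_prod G) = measure_pmf.expectation (bind_pmf q (\<lambda>f. bind_pmf p (\<lambda>y. return_pmf (f,y)))) (case_prod (\<lambda>f y. G y f))"
    by (simp add: case_prod_unfold)
  also have "\<dots> = measure_pmf.expectation q (\<lambda>f. measure_pmf.expectation p (\<lambda>y. G y f))"
    by (rule key) (rule B3)
  finally show ?thesis .
qed

lemma E_bounded:
  fixes F :: "'a \<Rightarrow> real"
  assumes "\<And>x. \<bar>F x\<bar> \<le> B"
  shows "\<bar>measure_pmf.expectation p F\<bar> \<le> B"
proof -
  have "\<bar>measure_pmf.expectation p F\<bar> \<le> measure_pmf.expectation p (\<lambda>x. \<bar>F x\<bar>)"
    by (rule integral_abs_bound)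
  also have "\<dots> \<le> measure_pmf.expectation p (\<lambda>x. B)"
    by (rule integral_mono) (auto intro: integrable_bounded_pmf[where B=B] assms)
  finally show ?thesis by simp
qed

lemma E_Pi_insert2:
  fixes F :: "('a \<Rightarrow> 'b) \<Rightarrow> real"
  assumes "finite A" "x \<notin> A" "\<And>f. \<bar>F f\<bar> \<le> B"
  shows "measure_pmf.expectation (Pi_pmf (insert x A) d p) F =
     measure_pmf.expectation (Pi_pmf A d p) (\<lambda>f. measure_pmf.expectation (p x) (\<lambda>y. F (f(x:=y))))"
  by (subst E_Pi_insert[OF assms]) (rule fubini_pmf[where B=B], rule assms)

definition bdd_diff :: "'a set \<Rightarrow> real \<Rightarrow> (('a \<Rightarrow> 'b) \<Rightarrow> real) \<Rightarrow> bool" where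
  "bdd_diff I c g \<longleftrightarrow> (\<forall>x y j. j \<in> I \<longrightarrow> (\<forall>k. k \<noteq> j \<longrightarrow> x k = y k) \<longrightarrow> \<bar>g x - g y\<bar> \<le> c)"

lemma hoeffding_pmf:
  fixes Z :: "'b \<Rightarrow> real"
  assumes "\<And>y y'. \<bar>Z y - Z y'\<bar> \<le> c" "l \<ge> 0"
  shows "measure_pmf.expectation q (\<lambda>y. exp (l * (Z y - measure_pmf.expectation q Z))) \<le> exp (l\<^sup>2 * c\<^sup>2 / 8)"
proof (cases "l = 0")
  case True then show ?thesis by simp
next
  case False
  then have l: "l > 0" using assms by simp
    define a where "a = Inf (range Z)"
  have zl: "Z x - c \<le> Z y" for x y using assms(1)[of x y] by (simp add: abs_le_iff)
  have bdd: "bdd_below (range Z)"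
    by (rule bdd_belowI[where m="Z undefined - c"]) (use zl in auto)
  have lo: "a \<le> Z y" for y unfolding a_def by (rule cInf_lower) (use bdd in auto)
  have hi: "Z y \<le> a + c" for y
  proof -
    have "Z y - c \<le> a" unfolding a_def
      by (rule cInf_greatest) (use zl in auto)
    then show ?thesis by simp
  qed
  have ibr: "interval_bounded_random_variable (measure_pmf q) Z a (a + c)"
    by unfold_locales (use lo hi in auto)
  have nn: "nn_integral q (\<lambda>x. exp (l * (Z x - measure_pmf.expectation q Z))) \<le> ennreal (exp (l\<^sup>2 * (a + c - a)\<^sup>2 / 8))"
    using interval_bounded_random_variable.Hoeffdings_lemma_nn_integral[OF ibr l] by simp
  have B: "\<bar>exp (l * (Z x - measure_pmf.expectation q Z))\<bar> \<le> exp (l * c)" for x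
  proof -
    have "Z x - measure_pmf.expectation q Z \<le> c"
    proof -
      have "measure_pmf.expectation q Z \<ge> measure_pmf.expectation q (\<lambda>_. a)"
        by (rule integral_mono) (use lo in \<open>auto intro: interval_bounded_random_variable.integrable[OF ibr]\<close>)
      then show ?thesis using hi[of x] by simp
    qed
    then show ?thesis using l by simp
  qed
  have "nn_integral q (\<lambda>x. exp (l * (Z x - measure_pmf.expectation q Z))) = ennreal (measure_pmf.expectation q (\<lambda>x. exp (l * (Z x - measure_pmf.expectation q Z))))"
    by (rule nn_integral_eq_integral) (auto intro: integrable_bounded_pmf[where B="exp (l*c)"] B)
  with nn show ?thesis by simp
qed

lemma bdd_diff_neg: "bdd_diff I c g \<Longrightarrow> bdd_diff I c (\<lambda>x. - g x)"
  unfolding bdd_diff_def by (metis abs_minus_commute minus_diff_eq minus_diff_minus)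

lemma mcdiarmid_mgf:
  fixes g :: "('a \<Rightarrow> 'b) \<Rightarrow> real"
  assumes "finite I" "bdd_diff I c g" "\<And>x. \<bar>g x\<bar> \<le> B" "l \<ge> 0"
  shows "measure_pmf.expectation (Pi_pmf I d p) (\<lambda>x. exp (l * (g x - measure_pmf.expectation (Pi_pmf I d p) g)))
           \<le> exp (l\<^sup>2 * real (card I) * c\<^sup>2 / 8)"
  using assms(1,2,3)
proof (induction I arbitrary: g B rule: finite_induct)
  case empty
  then show ?case by simp
next
  case (insert j I)
  define h where "h f = measure_pmf.expectation (p j) (\<lambda>y. g (f(j:=y)))" for f
  have hB: "\<bar>h f\<bar> \<le> B" for f unfolding h_def by (rule E_bounded) (rule insert.prems)
  have hdiff: "bdd_diff I c h"
    unfolding bdd_diff_def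
  proof (intro allI impI)
    fix x y :: "'a \<Rightarrow> 'b" and k assume k: "k \<in> I" and xy: "\<forall>i. i \<noteq> k \<longrightarrow> x i = y i"
    have "\<bar>h x - h y\<bar> = \<bar>measure_pmf.expectation (p j) (\<lambda>z. g (x(j:=z)) - g (y(j:=z)))\<bar>"
      unfolding h_def
      by (subst Bochner_Integration.integral_diff)
         (auto intro: integrable_bounded_pmf[where B=B] insert.prems)
    also have "\<dots> \<le> c"
    proof (rule E_bounded)
      fix z
      show "\<bar>g (x(j:=z)) - g (y(j:=z))\<bar> \<le> c"
        using insert.prems(1) k xy insert.hyps(2) unfolding bdd_diff_def
        by (metis fun_upd_apply insertCI)
    qed
    finally show "\<bar>h x - h y\<bar> \<le> c" .
  qed
  define E where "E = measure_pmf.expectation (Pi_pmf I d p) h"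
  have Eg: "measure_pmf.expectation (Pi_pmf (insert j I) d p) g = E"
    unfolding E_def h_def by (rule E_Pi_insert2[where B=B]) (use insert in auto)
  have inner: "measure_pmf.expectation (p j) (\<lambda>y. exp (l * (g (f(j:=y)) - h f))) \<le> exp (l\<^sup>2 * c\<^sup>2 / 8)" for f
    unfolding h_def
  proof (rule hoeffding_pmf[OF _ assms(4)])
    fix y y'
    show "\<bar>g (f(j := y)) - g (f(j := y'))\<bar> \<le> c"
      using insert.prems(1) unfolding bdd_diff_def by auto
  qed
  have IH: "measure_pmf.expectation (Pi_pmf I d p) (\<lambda>x. exp (l * (h x - E))) \<le> exp (l\<^sup>2 * real (card I) * c\<^sup>2 / 8)"
    unfolding E_def by (rule insert.IH[OF hdiff hB])
  have bnd1: "\<bar>exp (l * (g x - E))\<bar> \<le> exp (l * (2*B))" for x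
  proof -
    have "\<bar>E\<bar> \<le> B" unfolding E_def by (rule E_bounded) (rule hB)
    then have "g x - E \<le> 2*B" using insert.prems(2)[of x] by (auto simp: abs_le_iff)
    then show ?thesis using assms(4) by (simp add: mult_left_mono)
  qed
  have "measure_pmf.expectation (Pi_pmf (insert j I) d p) (\<lambda>x. exp (l * (g x - measure_pmf.expectation (Pi_pmf (insert j I) d p) g)))
     = measure_pmf.expectation (Pi_pmf I d p) (\<lambda>f. measure_pmf.expectation (p j) (\<lambda>y. exp (l * (g (f(j:=y)) - E))))"
    unfolding Eg by (rule E_Pi_insert2[where B="exp (l * (2*B))"]) (use insert bnd1 in auto)
  also have "\<dots> = measure_pmf.expectation (Pi_pmf I d p) (\<lambda>f. exp (l * (h f - E)) * measure_pmf.expectation (p j) (\<lambda>y. exp (l * (g (f(j:=y)) - h f))))"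
  proof (rule Bochner_Integration.integral_cong[OF refl])
    fix f
    have "(\<lambda>y. exp (l * (g (f(j:=y)) - E))) = (\<lambda>y. exp (l * (h f - E)) * exp (l * (g (f(j:=y)) - h f)))"
      by (simp add: mult_exp_exp algebra_simps)
    then show "measure_pmf.expectation (p j) (\<lambda>y. exp (l * (g (f(j:=y)) - E))) = exp (l * (h f - E)) * measure_pmf.expectation (p j) (\<lambda>y. exp (l * (g (f(j:=y)) - h f)))"
      by simp
  qed
  also have "\<dots> \<le> measure_pmf.expectation (Pi_pmf I d p) (\<lambda>f. exp (l * (h f - E)) * exp (l\<^sup>2 * c\<^sup>2 / 8))"
  proof (rule integral_mono)
    have b2: "\<bar>exp (l * (h f - E))\<bar> \<le> exp (l * (2*B))" for f
    proof -
      have "\<bar>E\<bar> \<le> B" unfolding E_def by (rule E_bounded) (rule hB)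
      then have "h f - E \<le> 2*B" using hB[of f] by (auto simp: abs_le_iff)
      then show ?thesis using assms(4) by (simp add: mult_left_mono)
    qed
    have b3: "\<bar>measure_pmf.expectation (p j) (\<lambda>y. exp (l * (g (f(j:=y)) - h f)))\<bar> \<le> exp (l * (2*B))" for f
    proof (rule E_bounded)
      fix y
      have "g (f(j:=y)) - h f \<le> 2*B" using hB[of f] insert.prems(2)[of "f(j:=y)"] by (auto simp: abs_le_iff simp del: fun_upd_apply)
      then show "\<bar>exp (l * (g (f(j:=y)) - h f))\<bar> \<le> exp (l * (2*B))" using assms(4) by (simp add: mult_left_mono)
    qed
    show "integrable (Pi_pmf I d p) (\<lambda>f. exp (l * (h f - E)) * measure_pmf.expectation (p j) (\<lambda>y. exp (l * (g (f(j:=y)) - h f))))"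
      by (rule integrable_bounded_pmf[where B="exp (l * (2*B)) * exp (l * (2*B))"])
         (simp only: abs_mult, rule mult_mono[OF b2 b3], simp_all)
    show "integrable (Pi_pmf I d p) (\<lambda>f. exp (l * (h f - E)) * exp (l\<^sup>2 * c\<^sup>2 / 8))"
      by (rule integrable_bounded_pmf[where B="exp (l * (2*B)) * exp (l\<^sup>2 * c\<^sup>2 / 8)"])
         (use b2 in \<open>simp add: abs_mult\<close>)
    fix f
    show "exp (l * (h f - E)) * measure_pmf.expectation (p j) (\<lambda>y. exp (l * (g (f(j:=y)) - h f))) \<le> exp (l * (h f - E)) * exp (l\<^sup>2 * c\<^sup>2 / 8)"
      by (rule mult_left_mono[OF inner]) simp
  qed
  also have "\<dots> = measure_pmf.expectation (Pi_pmf I d p) (\<lambda>f. exp (l * (h f - E))) * exp (l\<^sup>2 * c\<^sup>2 / 8)"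
    by simp
  also have "\<dots> \<le> exp (l\<^sup>2 * real (card I) * c\<^sup>2 / 8) * exp (l\<^sup>2 * c\<^sup>2 / 8)"
    by (rule mult_right_mono[OF IH]) simp
  also have "\<dots> = exp (l\<^sup>2 * real (card (insert j I)) * c\<^sup>2 / 8)"
    using insert.hyps by (simp add: mult_exp_exp algebra_simps add_divide_distrib)
  finally show ?case .
qed




lemma mcdiarmid_lower:
  fixes g :: "('a \<Rightarrow> 'b) \<Rightarrow> real"
  assumes "finite I" "card I > 0" "bdd_diff I c g" "c > 0" "\<And>x. \<bar>g x\<bar> \<le> B" "t > 0"
  shows "measure_pmf.prob (Pi_pmf I d p) {x. g x \<le> measure_pmf.expectation (Pi_pmf I d p) g - t}
           \<le> exp (- 2 * t\<^sup>2 / (real (card I) * c\<^sup>2))"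
proof -
  define n where "n = real (card I)"
  have n: "n > 0" using assms(2) by (simp add: n_def)
  define l where "l = 4 * t / (n * c\<^sup>2)"
  have l: "l > 0" using n assms by (simp add: l_def)
  let ?M = "Pi_pmf I d p"
  define Z where "Z x = - g x" for x
  have EZ: "measure_pmf.expectation ?M Z = - measure_pmf.expectation ?M g"
    unfolding Z_def by simp
  have ZB: "\<bar>Z x\<bar> \<le> B" for x using assms(5)[of x] by (simp add: Z_def)
  have Zd: "bdd_diff I c Z" unfolding Z_def by (rule bdd_diff_neg[OF assms(3)])
  have mgf: "measure_pmf.expectation ?M (\<lambda>x. exp (l * (Z x - measure_pmf.expectation ?M Z))) \<le> exp (l\<^sup>2 * n * c\<^sup>2 / 8)"
    unfolding n_def by (rule mcdiarmid_mgf[OF assms(1) Zd ZB]) (use l in simp)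
  have EB: "\<bar>measure_pmf.expectation ?M Z\<bar> \<le> B" by (rule E_bounded) (rule ZB)
  have set_eq: "{x. g x \<le> measure_pmf.expectation ?M g - t} = {x \<in> space ?M. exp (l * (Z x - measure_pmf.expectation ?M Z)) \<ge> exp (l * t)}"
    using l by (auto simp: EZ Z_def)
  have "measure_pmf.prob ?M {x. g x \<le> measure_pmf.expectation ?M g - t}
      \<le> measure_pmf.expectation ?M (\<lambda>x. exp (l * (Z x - measure_pmf.expectation ?M Z))) / exp (l * t)"
    unfolding set_eq
  proof (rule integral_Markov_inequality_measure[where A=UNIV])
    show "integrable (measure_pmf ?M) (\<lambda>x. exp (l * (Z x - measure_pmf.expectation ?M Z)))"
    proof (rule integrable_bounded_pmf[where B="exp (l * (2*B))"])
      fix x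
      have "Z x - measure_pmf.expectation ?M Z \<le> 2*B" using ZB[of x] EB by (auto simp: abs_le_iff)
      then show "\<bar>exp (l * (Z x - measure_pmf.expectation ?M Z))\<bar> \<le> exp (l * (2*B))"
        using l by simp
    qed
  qed auto
  also have "\<dots> \<le> exp (l\<^sup>2 * n * c\<^sup>2 / 8) / exp (l * t)"
    by (rule divide_right_mono[OF mgf]) simp
  also have "\<dots> = exp (l\<^sup>2 * n * c\<^sup>2 / 8 - l * t)" by (simp add: exp_diff)
  also have "l\<^sup>2 * n * c\<^sup>2 / 8 - l * t = - 2 * t\<^sup>2 / (n * c\<^sup>2)"
    using n assms(4) by (simp add: l_def field_simps power2_eq_square)
  finally show ?thesis by (simp add: n_def)
qed




definition Phi :: "'c set \<Rightarrow> ('c \<Rightarrow> real) \<Rightarrow> ('c \<Rightarrow> 'b \<Rightarrow> real) \<Rightarrow> 'a set \<Rightarrow> ('a \<Rightarrow> 'b) \<Rightarrow> real" where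
  "Phi F g \<phi> S X = (SUP f\<in>F. g f + (\<Sum>t\<in>S. \<phi> f (X t)))"

lemma Phi_bdd_above:
  fixes g :: "'c \<Rightarrow> real" and K :: real
  assumes "\<And>f. f \<in> F \<Longrightarrow> \<bar>g f\<bar> \<le> K" "\<And>f x. f \<in> F \<Longrightarrow> \<bar>\<phi> f x\<bar> \<le> 1"
  shows "bdd_above ((\<lambda>f. g f + (\<Sum>t\<in>S. \<phi> f (X t))) ` F)"
proof (rule bdd_aboveI2[where M="K + real (card S)"])
  fix f assume f: "f \<in> F"
  have "(\<Sum>t\<in>S. \<phi> f (X t)) \<le> (\<Sum>t\<in>S. 1)"
    by (rule sum_mono) (use assms(2)[OF f] in \<open>auto simp: abs_le_iff\<close>)
  then show "g f + (\<Sum>t\<in>S. \<phi> f (X t)) \<le> K + real (card S)"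
    using assms(1)[OF f] by (auto simp: abs_le_iff)
qed

lemma Phi_bound:
  fixes g :: "'c \<Rightarrow> real" and K :: real
  assumes "F \<noteq> {}" "\<And>f. f \<in> F \<Longrightarrow> \<bar>g f\<bar> \<le> K" "\<And>f x. f \<in> F \<Longrightarrow> \<bar>\<phi> f x\<bar> \<le> 1"
  shows "\<bar>Phi F g \<phi> S X\<bar> \<le> K + real (card S)"
proof -
  have up: "Phi F g \<phi> S X \<le> K + real (card S)"
    unfolding Phi_def
  proof (rule cSUP_least[OF assms(1)])
    fix f assume f: "f \<in> F"
    have "(\<Sum>t\<in>S. \<phi> f (X t)) \<le> (\<Sum>t\<in>S. 1)"
      by (rule sum_mono) (use assms(3)[OF f] in \<open>auto simp: abs_le_iff\<close>)
    then show "g f + (\<Sum>t\<in>S. \<phi> f (X t)) \<le> K + real (card S)"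
      using assms(2)[OF f] by (auto simp: abs_le_iff)
  qed
  obtain f0 where f0: "f0 \<in> F" using assms(1) by auto
  have "- (K + real (card S)) \<le> g f0 + (\<Sum>t\<in>S. \<phi> f0 (X t))"
  proof -
    have "(\<Sum>t\<in>S. -1) \<le> (\<Sum>t\<in>S. \<phi> f0 (X t))"
      by (rule sum_mono) (use assms(3)[OF f0] in \<open>auto simp: abs_le_iff\<close>)
    then show ?thesis using assms(2)[OF f0] by (auto simp: abs_le_iff)
  qed
  also have "\<dots> \<le> Phi F g \<phi> S X"
    unfolding Phi_def by (rule cSUP_upper[OF f0 Phi_bdd_above]) (use assms in auto)
  finally show ?thesis using up by (auto simp: abs_le_iff)
qed

lemma Phi_jensen:
  fixes q :: "'b pmf" and \<phi> :: "'c \<Rightarrow> 'b \<Rightarrow> real"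
  assumes F: "F \<noteq> {}" and phi: "\<And>f x. f \<in> F \<Longrightarrow> \<bar>\<phi> f x\<bar> \<le> 1"
    and E0: "\<And>f. f \<in> F \<Longrightarrow> measure_pmf.expectation q (\<phi> f) = 0"
  assumes "finite I" "A \<subseteq> I" "\<And>f. f \<in> F \<Longrightarrow> \<bar>g f\<bar> \<le> K"
  shows "measure_pmf.expectation (Pi_pmf I d (\<lambda>_. q)) (Phi F g \<phi> A)
           \<le> measure_pmf.expectation (Pi_pmf I d (\<lambda>_. q)) (Phi F g \<phi> I)"
  using assms(4-6)
proof (induction I arbitrary: A g K rule: finite_induct)
  case empty
  then show ?case by simp
next
  case (insert j I)
  define gy where "gy y f = g f + \<phi> f y" for y f
  have gyB: "\<bar>gy y f\<bar> \<le> K + 1" if "f \<in> F" for y f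
    using insert.prems(2)[OF that] phi[OF that, of y] by (auto simp: gy_def abs_le_iff)
  have PB: "\<bar>Phi F g' \<phi> S X\<bar> \<le> K' + real (card S)" if "\<And>f. f \<in> F \<Longrightarrow> \<bar>g' f\<bar> \<le> K'" for g' K' S X
    by (rule Phi_bound[OF F that phi])
  have shift: "Phi F g \<phi> (insert j S) (X(j:=y)) = Phi F (gy y) \<phi> S X" if "S \<subseteq> I" for S X y
  proof -
    have "j \<notin> S" using that insert.hyps by auto
    moreover have "finite S" using that insert.hyps finite_subset by auto
    ultimately show ?thesis unfolding Phi_def gy_def using that insert.hyps
      by (intro SUP_cong refl) (auto simp: add_ac intro!: sum.cong)
  qed
  have noj: "Phi F g' \<phi> S (X(j:=y)) = Phi F g' \<phi> S X" if "S \<subseteq> I" for S X y g'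
    unfolding Phi_def using that insert.hyps
    by (intro SUP_cong refl arg_cong2[where f="(+)"] sum.cong) auto
  let ?P = "Pi_pmf I d (\<lambda>_. q)"
  let ?Q = "Pi_pmf (insert j I) d (\<lambda>_. q)"
  show ?case
  proof (cases "j \<in> A")
    case True
    define A' where "A' = A - {j}"
    have A': "A' \<subseteq> I" "A = insert j A'" using insert.prems True by (auto simp: A'_def)
    have "measure_pmf.expectation ?Q (Phi F g \<phi> A)
        = measure_pmf.expectation q (\<lambda>y. measure_pmf.expectation ?P (\<lambda>X. Phi F g \<phi> A (X(j:=y))))"
      by (rule E_Pi_insert[where B="K + real (card A)"]) (fact insert.hyps(1), fact insert.hyps(2), rule PB, rule insert.prems(2))
    also have "\<dots> = measure_pmf.expectation q (\<lambda>y. measure_pmf.expectation ?P (Phi F (gy y) \<phi> A'))"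
      unfolding A'(2) using shift[OF A'(1)] by simp
    also have "\<dots> \<le> measure_pmf.expectation q (\<lambda>y. measure_pmf.expectation ?P (Phi F (gy y) \<phi> I))"
    proof (rule integral_mono)
      show "integrable q (\<lambda>y. measure_pmf.expectation ?P (Phi F (gy y) \<phi> A'))"
        by (rule integrable_bounded_pmf[where B="K + 1 + real (card A')"], rule E_bounded, rule PB, rule gyB)
      show "integrable q (\<lambda>y. measure_pmf.expectation ?P (Phi F (gy y) \<phi> I))"
        by (rule integrable_bounded_pmf[where B="K + 1 + real (card I)"], rule E_bounded, rule PB, rule gyB)
      fix y show "measure_pmf.expectation ?P (Phi F (gy y) \<phi> A') \<le> measure_pmf.expectation ?P (Phi F (gy y) \<phi> I)"
        by (rule insert.IH[OF A'(1)]) (rule gyB)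
    qed
    also have "\<dots> = measure_pmf.expectation q (\<lambda>y. measure_pmf.expectation ?P (\<lambda>X. Phi F g \<phi> (insert j I) (X(j:=y))))"
      using shift[OF order_refl] by simp
    also have "\<dots> = measure_pmf.expectation ?Q (Phi F g \<phi> (insert j I))"
      by (rule E_Pi_insert[symmetric, where B="K + real (card (insert j I))"]) (fact insert.hyps(1), fact insert.hyps(2), rule PB, rule insert.prems(2))
    finally show ?thesis .
  next
    case False
    then have AI: "A \<subseteq> I" using insert.prems by auto
    have "measure_pmf.expectation ?Q (Phi F g \<phi> A)
        = measure_pmf.expectation ?P (\<lambda>X. measure_pmf.expectation q (\<lambda>y. Phi F g \<phi> A (X(j:=y))))"
      by (rule E_Pi_insert2[where B="K + real (card A)"]) (fact insert.hyps(1), fact insert.hyps(2), rule PB, rule insert.prems(2))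
    also have "\<dots> = measure_pmf.expectation ?P (Phi F g \<phi> A)"
      using noj[OF AI] by simp
    also have "\<dots> \<le> measure_pmf.expectation ?P (Phi F g \<phi> I)"
      by (rule insert.IH[OF AI insert.prems(2)])
    also have "\<dots> \<le> measure_pmf.expectation ?P (\<lambda>X. measure_pmf.expectation q (\<lambda>y. Phi F (gy y) \<phi> I X))"
    proof (rule integral_mono)
      show "integrable ?P (Phi F g \<phi> I)"
        by (rule integrable_bounded_pmf[where B="K + real (card I)"], rule PB, rule insert.prems(2))
      show "integrable ?P (\<lambda>X. measure_pmf.expectation q (\<lambda>y. Phi F (gy y) \<phi> I X))"
        by (rule integrable_bounded_pmf[where B="K + 1 + real (card I)"], rule E_bounded, rule PB, rule gyB)
      fix X
      show "Phi F g \<phi> I X \<le> measure_pmf.expectation q (\<lambda>y. Phi F (gy y) \<phi> I X)"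
        unfolding Phi_def
      proof (rule cSUP_least[OF F])
        fix f assume f: "f \<in> F"
        have "g f + (\<Sum>t\<in>I. \<phi> f (X t)) = measure_pmf.expectation q (\<lambda>y. gy y f + (\<Sum>t\<in>I. \<phi> f (X t)))"
        proof -
          have "measure_pmf.expectation q (\<lambda>y. gy y f + (\<Sum>t\<in>I. \<phi> f (X t)))
              = measure_pmf.expectation q (\<lambda>y. \<phi> f y + (g f + (\<Sum>t\<in>I. \<phi> f (X t))))"
            by (simp add: gy_def add_ac)
          also have "\<dots> = measure_pmf.expectation q (\<phi> f) + (g f + (\<Sum>t\<in>I. \<phi> f (X t)))"
            by (subst Bochner_Integration.integral_add)
               (auto intro: integrable_bounded_pmf[where B=1] phi[OF f])
          finally show ?thesis using E0[OF f] by simp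
        qed
        also have "\<dots> \<le> measure_pmf.expectation q (\<lambda>y. SUP f\<in>F. gy y f + (\<Sum>t\<in>I. \<phi> f (X t)))"
        proof (rule integral_mono)
          show "integrable q (\<lambda>y. gy y f + (\<Sum>t\<in>I. \<phi> f (X t)))"
          proof (rule integrable_bounded_pmf[where B="K + 1 + real (card I)"])
            fix y
            have "\<bar>\<Sum>t\<in>I. \<phi> f (X t)\<bar> \<le> (\<Sum>t\<in>I. \<bar>\<phi> f (X t)\<bar>)" by (rule sum_abs)
            also have "\<dots> \<le> (\<Sum>t\<in>I. 1)" by (rule sum_mono, rule phi[OF f])
            finally show "\<bar>gy y f + (\<Sum>t\<in>I. \<phi> f (X t))\<bar> \<le> K + 1 + real (card I)"
              using gyB[OF f, of y] by (simp add: abs_le_iff)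
          qed
          show "integrable q (\<lambda>y. SUP f\<in>F. gy y f + (\<Sum>t\<in>I. \<phi> f (X t)))"
            using integrable_bounded_pmf[where B="K + 1 + real (card I)" and M=q and f="\<lambda>y. Phi F (gy y) \<phi> I X"]
              PB gyB unfolding Phi_def by blast
          fix y show "gy y f + (\<Sum>t\<in>I. \<phi> f (X t)) \<le> (SUP f\<in>F. gy y f + (\<Sum>t\<in>I. \<phi> f (X t)))"
            by (rule cSUP_upper[OF f Phi_bdd_above]) (use gyB phi in auto)
        qed
        finally show "g f + (\<Sum>t\<in>I. \<phi> f (X t)) \<le> measure_pmf.expectation q (\<lambda>y. SUP f\<in>F. gy y f + (\<Sum>t\<in>I. \<phi> f (X t)))" .
      qed
    qed
    also have "\<dots> = measure_pmf.expectation ?P (\<lambda>X. measure_pmf.expectation q (\<lambda>y. Phi F g \<phi> (insert j I) (X(j:=y))))"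
      using shift[OF order_refl] by simp
    also have "\<dots> = measure_pmf.expectation ?Q (Phi F g \<phi> (insert j I))"
      by (rule E_Pi_insert2[symmetric, where B="K + real (card (insert j I))"]) (fact insert.hyps(1), fact insert.hyps(2), rule PB, rule insert.prems(2))
    finally show ?thesis .
  qed
qed




lemma pmf_summable: "pmf p summable_on A"
proof -
  have "Infinite_Sum.abs_summable_on (pmf p) A"
    using abs_summable_equivalent pmf_abs_summable by blast
  then show ?thesis by (rule abs_summable_summable)
qed

lemma pmf_infsum_1: "infsum (pmf p) UNIV = 1"
  using infsetsum_infsum[OF pmf_abs_summable, of p UNIV] infsetsum_pmf_eq_1[of p UNIV] by simp

lemma pmf_infsum_compl: "finite S \<Longrightarrow> infsum (pmf p) (- S) = 1 - sum (pmf p) S"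
proof -
  assume fin: "finite S"
  have "infsum (pmf p) (S \<union> - S) = infsum (pmf p) S + infsum (pmf p) (- S)"
    by (rule infsum_Un_disjoint) (auto intro: pmf_summable)
  then show ?thesis using pmf_infsum_1[of p] fin by simp
qed

lemma emp_zero: "i \<notin> X ` {..<m} \<Longrightarrow> emp_dist m X i = 0"
  unfolding emp_dist_def by auto

lemma emp_nonneg: "emp_dist m X i \<ge> 0"
  unfolding emp_dist_def by auto

lemma emp_sum: assumes "m \<ge> 1" "finite S" "X ` {..<m} \<subseteq> S"
  shows "(\<Sum>i\<in>S. emp_dist m X i) = 1"
proof -
  have "(\<Sum>i\<in>S. card {t \<in> {..<m}. X t = i}) = (\<Sum>i\<in>S. \<Sum>t\<in>{t \<in> {..<m}. X t = i}. (1::nat))"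
    by simp
  also have "\<dots> = (\<Sum>t\<in>{..<m}. (1::nat))"
    by (rule sum.group) (use assms in auto)
  finally have "(\<Sum>i\<in>S. real (card {t \<in> {..<m}. X t = i})) = real m"
    by (metis (mono_tags, lifting) card_lessThan of_nat_sum sum.cong card_eq_sum)
  then show ?thesis using assms(1) unfolding emp_dist_def by (simp add: sum_distrib_left[symmetric] sum_divide_distrib[symmetric])
qed

lemma tv_formula:
  fixes \<mu> :: "nat pmf"
  assumes "m \<ge> 1" "finite S" "X ` {..<m} \<subseteq> S"
  shows "tv_dist (emp_dist m X) (pmf \<mu>) = (\<Sum>i\<in>S. max 0 (emp_dist m X i - pmf \<mu> i))"
proof -
  let ?h = "\<lambda>i. \<bar>emp_dist m X i - pmf \<mu> i\<bar>"
  have hS: "?h i = pmf \<mu> i" if "i \<in> - S" for i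
  proof -
    have "i \<notin> X ` {..<m}" using that assms by auto
    then show ?thesis using emp_zero[of i X m] by simp
  qed
  have sm: "?h summable_on - S"
  proof -
    have "pmf \<mu> summable_on - S" by (rule pmf_summable)
    with hS show ?thesis by (metis (no_types, lifting) summable_on_cong)
  qed
  have "infsum ?h UNIV = infsum ?h (S \<union> - S)" by simp
  also have "\<dots> = infsum ?h S + infsum ?h (- S)"
    by (rule infsum_Un_disjoint) (use assms sm in auto)
  also have "infsum ?h (- S) = infsum (pmf \<mu>) (- S)"
    by (rule infsum_cong) (rule hS)
  also have "\<dots> = 1 - sum (pmf \<mu>) S" by (rule pmf_infsum_compl[OF assms(2)])
  finally have "infsum ?h UNIV = (\<Sum>i\<in>S. ?h i) + (\<Sum>i\<in>S. emp_dist m X i) - sum (pmf \<mu>) S"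
    using assms emp_sum by simp
  also have "\<dots> = (\<Sum>i\<in>S. ?h i + emp_dist m X i - pmf \<mu> i)"
    by (simp add: sum.distrib sum_subtractf)
  also have "\<dots> = (\<Sum>i\<in>S. 2 * max 0 (emp_dist m X i - pmf \<mu> i))"
    by (rule sum.cong) (auto simp: max_def abs_if)
  finally show ?thesis unfolding tv_dist_def by (simp add: sum_distrib_left[symmetric])
qed




definition F01 :: "(nat \<Rightarrow> real) set" where "F01 = {f. \<forall>x. f x \<in> {0, 1}}"

lemma F01_ne: "F01 \<noteq> {}"
proof -
  have "(\<lambda>_. 0) \<in> F01" by (simp add: F01_def)
  then show ?thesis by blast
qed

lemma F01_bounds: "f \<in> F01 \<Longrightarrow> 0 \<le> f x \<and> f x \<le> 1"
proof -
  assume "f \<in> F01"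
  then have "f x = 0 \<or> f x = 1" unfolding F01_def by auto
  then show ?thesis by auto
qed

lemma Pf_bounds:
  fixes \<mu> :: "nat pmf"
  assumes f: "f \<in> F01" and S: "finite S"
  shows "(\<Sum>i\<in>S. f i * pmf \<mu> i) \<le> measure_pmf.expectation \<mu> f"
    and "measure_pmf.expectation \<mu> f \<le> (\<Sum>i\<in>S. f i * pmf \<mu> i) + (1 - (\<Sum>i\<in>S. pmf \<mu> i))"
    and "0 \<le> measure_pmf.expectation \<mu> f" and "measure_pmf.expectation \<mu> f \<le> 1"
proof -
  have fb: "\<bar>f x\<bar> \<le> 1" for x using F01_bounds[OF f, of x] by auto
  have int: "integrable \<mu> (\<lambda>x. f x * indicator A x)" for A
    by (rule integrable_bounded_pmf[where B=1]) (use fb in \<open>auto simp: indicator_def\<close>)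
  have split: "measure_pmf.expectation \<mu> f = measure_pmf.expectation \<mu> (\<lambda>x. f x * indicator S x) + measure_pmf.expectation \<mu> (\<lambda>x. f x * indicator (-S) x)"
    by (subst Bochner_Integration.integral_add[symmetric], rule int, rule int, rule Bochner_Integration.integral_cong) (auto simp: indicator_def)
  have p1: "measure_pmf.expectation \<mu> (\<lambda>x. f x * indicator S x) = (\<Sum>i\<in>S. f i * pmf \<mu> i)"
    by (subst integral_measure_pmf_real[where A=S]) (use S in \<open>auto intro!: sum.cong simp: indicator_def\<close>)
  have p2: "0 \<le> measure_pmf.expectation \<mu> (\<lambda>x. f x * indicator (-S) x)"
    by (rule Bochner_Integration.integral_nonneg) (use F01_bounds[OF f] in \<open>auto simp: indicator_def\<close>)
  have "measure_pmf.expectation \<mu> (\<lambda>x. f x * indicator (-S) x) \<le> measure_pmf.expectation \<mu> (indicator (-S))"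
    by (rule integral_mono) (use F01_bounds[OF f] in \<open>auto intro: int integrable_bounded_pmf[where B=1] simp: indicator_def\<close>)
  also have "\<dots> = measure_pmf.prob \<mu> (-S)" by simp
  also have "\<dots> = 1 - (\<Sum>i\<in>S. pmf \<mu> i)"
    using measure_pmf.prob_compl[of S \<mu>] measure_measure_pmf_finite[OF S, of \<mu>]
    by (simp add: Compl_eq_Diff_UNIV)
  finally have p3: "measure_pmf.expectation \<mu> (\<lambda>x. f x * indicator (-S) x) \<le> 1 - (\<Sum>i\<in>S. pmf \<mu> i)" .
  show "(\<Sum>i\<in>S. f i * pmf \<mu> i) \<le> measure_pmf.expectation \<mu> f" using split p1 p2 by simp
  show "measure_pmf.expectation \<mu> f \<le> (\<Sum>i\<in>S. f i * pmf \<mu> i) + (1 - (\<Sum>i\<in>S. pmf \<mu> i))"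
    using split p1 p3 by simp
  show "0 \<le> measure_pmf.expectation \<mu> f"
    by (rule Bochner_Integration.integral_nonneg) (use F01_bounds[OF f] in auto)
  have "measure_pmf.expectation \<mu> f \<le> measure_pmf.expectation \<mu> (\<lambda>_. 1)"
    by (rule integral_mono) (use F01_bounds[OF f] fb in \<open>auto intro: integrable_bounded_pmf[where B=1]\<close>)
  then show "measure_pmf.expectation \<mu> f \<le> 1" by simp
qed

lemma sum_emp:
  assumes "m \<ge> 1" "finite S" "X ` {..<m} \<subseteq> S"
  shows "(\<Sum>t<m. f (X t)) = real m * (\<Sum>i\<in>S. f i * emp_dist m X i)"
proof -
  have "(\<Sum>t<m. f (X t)) = (\<Sum>i\<in>S. \<Sum>t\<in>{t \<in> {..<m}. X t = i}. f (X t))"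
    by (rule sum.group[symmetric]) (use assms in auto)
  also have "\<dots> = (\<Sum>i\<in>S. f i * real (card {t \<in> {..<m}. X t = i}))"
    by (rule sum.cong) auto
  also have "\<dots> = real m * (\<Sum>i\<in>S. f i * emp_dist m X i)"
    using assms(1) by (simp add: emp_dist_def sum_distrib_left)
  finally show ?thesis .
qed

lemma tv_plus:
  fixes \<mu> :: "nat pmf"
  assumes "m \<ge> 1" "f \<in> F01"
  shows "(\<Sum>t<m. f (X t) - measure_pmf.expectation \<mu> f) \<le> real m * tv_dist (emp_dist m X) (pmf \<mu>)"
proof -
  define S where "S = X ` {..<m}"
  have S: "finite S" "X ` {..<m} \<subseteq> S" by (auto simp: S_def)
  have "(\<Sum>t<m. f (X t) - measure_pmf.expectation \<mu> f) = real m * (\<Sum>i\<in>S. f i * emp_dist m X i) - real m * measure_pmf.expectation \<mu> f"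
    by (simp add: sum_subtractf sum_emp[OF assms(1) S])
  also have "\<dots> \<le> real m * (\<Sum>i\<in>S. f i * emp_dist m X i) - real m * (\<Sum>i\<in>S. f i * pmf \<mu> i)"
    using mult_left_mono[OF Pf_bounds(1)[OF assms(2) S(1), of \<mu>], of "real m"] by simp
  also have "\<dots> = real m * (\<Sum>i\<in>S. f i * (emp_dist m X i - pmf \<mu> i))"
    by (simp add: sum_subtractf right_diff_distrib)
  also have "\<dots> \<le> real m * (\<Sum>i\<in>S. max 0 (emp_dist m X i - pmf \<mu> i))"
  proof (rule mult_left_mono[OF sum_mono])
    fix i
    show "f i * (emp_dist m X i - pmf \<mu> i) \<le> max 0 (emp_dist m X i - pmf \<mu> i)"
      using assms(2) unfolding F01_def by (cases "f i = 0") auto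
  qed simp
  also have "\<dots> = real m * tv_dist (emp_dist m X) (pmf \<mu>)"
    by (simp add: tv_formula[OF assms(1) S])
  finally show ?thesis .
qed

lemma tv_minus:
  fixes \<mu> :: "nat pmf"
  assumes "m \<ge> 1" "f \<in> F01"
  shows "(\<Sum>t<m. measure_pmf.expectation \<mu> f - f (X t)) \<le> real m * tv_dist (emp_dist m X) (pmf \<mu>)"
proof -
  define S where "S = X ` {..<m}"
  have S: "finite S" "X ` {..<m} \<subseteq> S" by (auto simp: S_def)
  have "(\<Sum>t<m. measure_pmf.expectation \<mu> f - f (X t)) = real m * measure_pmf.expectation \<mu> f - real m * (\<Sum>i\<in>S. f i * emp_dist m X i)"
    by (simp add: sum_subtractf sum_emp[OF assms(1) S])
  also have "\<dots> \<le> real m * ((\<Sum>i\<in>S. f i * pmf \<mu> i) + ((\<Sum>i\<in>S. emp_dist m X i) - (\<Sum>i\<in>S. pmf \<mu> i))) - real m * (\<Sum>i\<in>S. f i * emp_dist m X i)"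
    using mult_left_mono[OF Pf_bounds(2)[OF assms(2) S(1), of \<mu>], of "real m"] emp_sum[OF assms(1) S] by simp
  also have "\<dots> = real m * (\<Sum>i\<in>S. (1 - f i) * (emp_dist m X i - pmf \<mu> i))"
    by (simp add: sum_subtractf sum.distrib algebra_simps)
  also have "\<dots> \<le> real m * (\<Sum>i\<in>S. max 0 (emp_dist m X i - pmf \<mu> i))"
  proof (rule mult_left_mono[OF sum_mono])
    fix i
    show "(1 - f i) * (emp_dist m X i - pmf \<mu> i) \<le> max 0 (emp_dist m X i - pmf \<mu> i)"
      using assms(2) unfolding F01_def by (cases "f i = 0") auto
  qed simp
  also have "\<dots> = real m * tv_dist (emp_dist m X) (pmf \<mu>)"
    by (simp add: tv_formula[OF assms(1) S])
  finally show ?thesis .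
qed

lemma tv_bounds:
  fixes \<mu> :: "nat pmf"
  assumes "m \<ge> 1"
  shows "0 \<le> tv_dist (emp_dist m X) (pmf \<mu>)" "tv_dist (emp_dist m X) (pmf \<mu>) \<le> 1"
proof -
  define S where "S = X ` {..<m}"
  have S: "finite S" "X ` {..<m} \<subseteq> S" by (auto simp: S_def)
  show "0 \<le> tv_dist (emp_dist m X) (pmf \<mu>)"
    by (simp add: tv_formula[OF assms(1) S] sum_nonneg)
  have "(\<Sum>i\<in>S. max 0 (emp_dist m X i - pmf \<mu> i)) \<le> (\<Sum>i\<in>S. emp_dist m X i)"
    by (rule sum_mono) (auto simp: emp_nonneg pmf_nonneg)
  then show "tv_dist (emp_dist m X) (pmf \<mu>) \<le> 1"
    by (simp add: tv_formula[OF assms(1) S] emp_sum[OF assms(1) S])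
qed

lemma count_diff:
  fixes m j i :: nat and X Y :: "nat \<Rightarrow> nat"
  assumes "j < m" "\<And>k. k \<noteq> j \<Longrightarrow> X k = Y k"
  shows "real (card {t \<in> {..<m}. X t = i}) - real (card {t \<in> {..<m}. Y t = i})
         = (if X j = i then 1 else 0) - (if Y j = i then 1 else 0)"
proof -
  have c: "real (card {t \<in> A. P t}) = (\<Sum>t\<in>A. if P t then 1 else 0)" if "finite A" for A :: "nat set" and P
  proof -
    have "{t \<in> A. P t} = A \<inter> Collect P" by auto
    then show ?thesis using that by (simp add: sum.If_cases)
  qed
  have "real (card {t \<in> {..<m}. X t = i}) - real (card {t \<in> {..<m}. Y t = i})
     = (\<Sum>t<m. (if X t = i then 1 else 0) - (if Y t = i then 1 else 0))"
    using c[OF finite_lessThan, of m "\<lambda>t. X t = i"] c[OF finite_lessThan, of m "\<lambda>t. Y t = i"]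
    by (simp only: sum_subtractf)
  also have "\<dots> = (\<Sum>t\<in>{j}. (if X t = i then 1 else 0) - (if Y t = i then 1 else 0))"
    by (rule sum.mono_neutral_right) (use assms in auto)
  finally show ?thesis by simp
qed

lemma tv_diff:
  fixes \<mu> :: "nat pmf"
  assumes "m \<ge> 1" "j < m" "\<And>k. k \<noteq> j \<Longrightarrow> X k = Y k"
  shows "tv_dist (emp_dist m X) (pmf \<mu>) - tv_dist (emp_dist m Y) (pmf \<mu>) \<le> 1 / real m"
proof -
  define S where "S = X ` {..<m} \<union> Y ` {..<m}"
  have S: "finite S" "X ` {..<m} \<subseteq> S" "Y ` {..<m} \<subseteq> S" by (auto simp: S_def)
  have "tv_dist (emp_dist m X) (pmf \<mu>) - tv_dist (emp_dist m Y) (pmf \<mu>)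
      = (\<Sum>i\<in>S. max 0 (emp_dist m X i - pmf \<mu> i) - max 0 (emp_dist m Y i - pmf \<mu> i))"
    by (simp add: tv_formula[OF assms(1) S(1,2)] tv_formula[OF assms(1) S(1,3)] sum_subtractf)
  also have "\<dots> \<le> (\<Sum>i\<in>S. (if X j = i then 1 / real m else 0))"
  proof (rule sum_mono)
    fix i
    have "emp_dist m X i - emp_dist m Y i = (1 / real m) * (real (card {t \<in> {..<m}. X t = i}) - real (card {t \<in> {..<m}. Y t = i}))"
      unfolding emp_dist_def by (simp only: right_diff_distrib)
    also have "\<dots> = ((if X j = i then 1 else 0) - (if Y j = i then 1 else 0)) / real m"
    proof -
      have eq: "real (card {t \<in> {..<m}. X t = i}) - real (card {t \<in> {..<m}. Y t = i}) = (if X j = i then 1 else 0) - (if Y j = i then 1 else 0)"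
        by (rule count_diff[OF assms(2,3)])
      have gen: "1 / (a::real) * d = d / a" for a d by simp
      show ?thesis by (simp only: eq gen)
    qed
    finally have ediff: "emp_dist m X i - emp_dist m Y i = ((if X j = i then 1 else 0) - (if Y j = i then 1 else 0)) / real m" .
    then show "max 0 (emp_dist m X i - pmf \<mu> i) - max 0 (emp_dist m Y i - pmf \<mu> i) \<le> (if X j = i then 1 / real m else 0)"
    proof -
      have mp: "1 / real m > 0" using assms(1) by simp
      have g: "max 0 (a - p) - max 0 (b - p) \<le> max 0 (a - b)" for a b p :: real by (simp add: max_def)
      have "max 0 (emp_dist m X i - emp_dist m Y i) \<le> (if X j = i then 1 / real m else 0)"
        unfolding ediff using mp by (cases "X j = i"; cases "Y j = i") auto
      then show ?thesis using g[of "emp_dist m X i" "pmf \<mu> i" "emp_dist m Y i"] by linarith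
    qed
  qed
  also have "\<dots> = 1 / real m"
    using S assms(2) by (simp add: sum.delta' image_subset_iff)
  finally show ?thesis .
qed




abbreviation Sig :: "nat \<Rightarrow> (nat \<Rightarrow> real) set" where
  "Sig m \<equiv> PiE {..<m} (\<lambda>_. {-1, 1::real})"

lemma card_Sig: "card (Sig m) = 2 ^ m"
  by (simp add: card_PiE numeral_2_eq_2)

lemma Sig_val: "\<sigma> \<in> Sig m \<Longrightarrow> t < m \<Longrightarrow> \<sigma> t = 1 \<or> \<sigma> t = -1"
  by (auto simp: PiE_iff)

lemma sum_cross_zero:
  assumes "t < m" "s \<noteq> t"
  shows "(\<Sum>\<sigma>\<in>Sig m. \<sigma> t * \<sigma> s) = 0"
proof -
  define fl where "fl \<sigma> = \<sigma>(t := - \<sigma> t)" for \<sigma> :: "nat \<Rightarrow> real"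
  have fl_in: "fl \<sigma> \<in> Sig m" if "\<sigma> \<in> Sig m" for \<sigma>
    using that assms(1) unfolding fl_def by (auto simp: PiE_iff extensional_def)
  have fl_fl: "fl (fl \<sigma>) = \<sigma>" for \<sigma> by (simp add: fl_def)
  have "(\<Sum>\<sigma>\<in>Sig m. \<sigma> t * \<sigma> s) = (\<Sum>\<sigma>\<in>Sig m. fl \<sigma> t * fl \<sigma> s)"
    by (rule sum.reindex_bij_witness[of _ fl fl]) (auto simp: fl_fl fl_in)
  also have "\<dots> = - (\<Sum>\<sigma>\<in>Sig m. \<sigma> t * \<sigma> s)"
    using assms(2) by (simp add: fl_def sum_negf[symmetric])
  finally show ?thesis by simp
qed

lemma sum_sq_Sig: "(\<Sum>\<sigma>\<in>Sig m. (\<Sum>t<m. \<sigma> t)\<^sup>2) = real m * 2 ^ m"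
proof -
  have "(\<Sum>\<sigma>\<in>Sig m. (\<Sum>t<m. \<sigma> t)\<^sup>2) = (\<Sum>\<sigma>\<in>Sig m. \<Sum>t<m. \<Sum>s<m. \<sigma> t * \<sigma> s)"
    by (simp add: power2_eq_square sum_product)
  also have "\<dots> = (\<Sum>t<m. \<Sum>s<m. \<Sum>\<sigma>\<in>Sig m. \<sigma> t * \<sigma> s)"
    by (rule trans[OF sum.swap], rule sum.cong[OF refl], rule sum.swap)
  also have "\<dots> = (\<Sum>t<m. \<Sum>s<m. if s = t then 2 ^ m else 0)"
  proof (intro sum.cong refl)
    fix t s assume ts: "t \<in> {..<m}" "s \<in> {..<m}"
    show "(\<Sum>\<sigma>\<in>Sig m. \<sigma> t * \<sigma> s) = (if s = t then 2 ^ m else 0)"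
    proof (cases "s = t")
      case True
      have "(\<Sum>\<sigma>\<in>Sig m. \<sigma> t * \<sigma> s) = (\<Sum>\<sigma>\<in>Sig m. 1)"
      proof (rule sum.cong[OF refl])
        fix \<sigma> assume "\<sigma> \<in> Sig m"
        then have "\<sigma> t = 1 \<or> \<sigma> t = -1" using ts by (intro Sig_val) auto
        then show "\<sigma> t * \<sigma> s = 1" using True by auto
      qed
      then show ?thesis using True by (simp add: card_Sig)
    next
      case False
      then show ?thesis using sum_cross_zero[of t m s] ts by simp
    qed
  qed
  also have "\<dots> = real m * 2 ^ m" by simp
  finally show ?thesis .
qed

lemma sum_abs_Sig:
  assumes "m \<ge> 1"
  shows "(\<Sum>\<sigma>\<in>Sig m. \<bar>\<Sum>t<m. \<sigma> t\<bar>) \<le> sqrt (real m) * 2 ^ m"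
proof -
  have sm: "sqrt (real m) > 0" using assms by simp
  have pt: "\<bar>x\<bar> \<le> (x\<^sup>2 + real m) / (2 * sqrt (real m))" for x :: real
  proof -
    have "0 \<le> (\<bar>x\<bar> - sqrt (real m))\<^sup>2" by simp
    then have "2 * \<bar>x\<bar> * sqrt (real m) \<le> x\<^sup>2 + real m"
      by (simp add: power2_eq_square algebra_simps)
    then show ?thesis using sm by (simp add: field_simps)
  qed
  have "(\<Sum>\<sigma>\<in>Sig m. \<bar>\<Sum>t<m. \<sigma> t\<bar>) \<le> (\<Sum>\<sigma>\<in>Sig m. ((\<Sum>t<m. \<sigma> t)\<^sup>2 + real m) / (2 * sqrt (real m)))"
    by (rule sum_mono) (rule pt)
  also have "\<dots> = ((\<Sum>\<sigma>\<in>Sig m. (\<Sum>t<m. \<sigma> t)\<^sup>2) + real (card (Sig m)) * real m) / (2 * sqrt (real m))"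
    by (simp add: sum_divide_distrib[symmetric] sum.distrib)
  also have "\<dots> = (real m * 2 ^ m + 2 ^ m * real m) / (2 * sqrt (real m))"
    by (simp add: sum_sq_Sig card_Sig)
  also have "\<dots> = (sqrt (real m) * sqrt (real m) * 2 ^ m + 2 ^ m * (sqrt (real m) * sqrt (real m))) / (2 * sqrt (real m))"
    by simp
  also have "\<dots> = sqrt (real m) * 2 ^ m"
  proof -
    have gen: "x > 0 \<Longrightarrow> (x*x*c + c*(x*x))/(2*x) = x*c" for x c :: real
      by (simp add: field_simps)
    show ?thesis by (rule gen[OF sm])
  qed
  finally show ?thesis .
qed




definition RT :: "nat \<Rightarrow> (nat \<Rightarrow> real) \<Rightarrow> (nat \<Rightarrow> nat) \<Rightarrow> (nat \<Rightarrow> real) \<Rightarrow> real" where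
  "RT m \<sigma> X f = (1 / real m) * (\<Sum>t<m. \<sigma> t * f (X t))"

lemma rad_def': "emp_rademacher m X = (1 / 2 ^ m) * (\<Sum>\<sigma>\<in>Sig m. (SUP f\<in>F01. RT m \<sigma> X f))"
  unfolding emp_rademacher_def RT_def F01_def ..

lemma sum_abs_le:
  assumes "\<sigma> \<in> Sig m" "f \<in> F01"
  shows "\<bar>\<Sum>t<m. \<sigma> t * f (X t)\<bar> \<le> real m"
proof -
  have "\<bar>\<Sum>t<m. \<sigma> t * f (X t)\<bar> \<le> (\<Sum>t<m. \<bar>\<sigma> t * f (X t)\<bar>)" by (rule sum_abs)
  also have "\<dots> \<le> (\<Sum>t<m. 1)"
  proof (rule sum_mono)
    fix t assume t: "t \<in> {..<m}"
    have "\<sigma> t = 1 \<or> \<sigma> t = -1" using Sig_val[OF assms(1)] t by auto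
    then show "\<bar>\<sigma> t * f (X t)\<bar> \<le> 1" using F01_bounds[OF assms(2), of "X t"] by (auto simp: abs_mult)
  qed
  finally show ?thesis by simp
qed

lemma RT_abs: "\<sigma> \<in> Sig m \<Longrightarrow> f \<in> F01 \<Longrightarrow> m \<ge> 1 \<Longrightarrow> \<bar>RT m \<sigma> X f\<bar> \<le> 1"
  using sum_abs_le[of \<sigma> m f X] by (simp add: RT_def abs_mult field_simps)

lemma RT_bdd: "\<sigma> \<in> Sig m \<Longrightarrow> m \<ge> 1 \<Longrightarrow> bdd_above (RT m \<sigma> X ` F01)"
  by (rule bdd_aboveI2[where M=1]) (use RT_abs in \<open>force simp: abs_le_iff\<close>)

lemma zero_F01: "(\<lambda>_. 0) \<in> F01" by (simp add: F01_def)

lemma sup_bounds: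
  assumes "\<sigma> \<in> Sig m" "m \<ge> 1"
  shows "0 \<le> (SUP f\<in>F01. RT m \<sigma> X f)" "(SUP f\<in>F01. RT m \<sigma> X f) \<le> 1"
proof -
  have "RT m \<sigma> X (\<lambda>_. 0) \<le> (SUP f\<in>F01. RT m \<sigma> X f)"
    by (rule cSUP_upper[OF zero_F01 RT_bdd[OF assms]])
  then show "0 \<le> (SUP f\<in>F01. RT m \<sigma> X f)" by (simp add: RT_def)
  show "(SUP f\<in>F01. RT m \<sigma> X f) \<le> 1"
    by (rule cSUP_least[OF F01_ne]) (use RT_abs[OF assms(1) _ assms(2)] in \<open>force simp: abs_le_iff\<close>)
qed

lemma rad_bounds:
  assumes "m \<ge> 1"
  shows "0 \<le> emp_rademacher m X" "emp_rademacher m X \<le> 1"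
proof -
  show "0 \<le> emp_rademacher m X" unfolding rad_def'
    by (intro mult_nonneg_nonneg sum_nonneg) (use sup_bounds(1) assms in auto)
  have "(\<Sum>\<sigma>\<in>Sig m. (SUP f\<in>F01. RT m \<sigma> X f)) \<le> (\<Sum>\<sigma>\<in>Sig m. 1)"
    by (rule sum_mono) (use sup_bounds(2) assms in auto)
  then show "emp_rademacher m X \<le> 1" unfolding rad_def' by (simp add: card_Sig)
qed

lemma rad_diff:
  assumes "m \<ge> 1" "j < m" "\<And>k. k \<noteq> j \<Longrightarrow> X k = Y k"
  shows "emp_rademacher m X - emp_rademacher m Y \<le> 1 / real m"
proof -
  have one: "(SUP f\<in>F01. RT m \<sigma> X f) - (SUP f\<in>F01. RT m \<sigma> Y f) \<le> 1 / real m" if s: "\<sigma> \<in> Sig m" for \<sigma>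
  proof -
    have "(SUP f\<in>F01. RT m \<sigma> X f) \<le> (SUP f\<in>F01. RT m \<sigma> Y f) + 1 / real m"
    proof (rule cSUP_least[OF F01_ne])
      fix f assume f: "f \<in> F01"
      have "(\<Sum>t<m. \<sigma> t * f (X t)) - (\<Sum>t<m. \<sigma> t * f (Y t)) = (\<Sum>t<m. \<sigma> t * f (X t) - \<sigma> t * f (Y t))"
        by (simp add: sum_subtractf)
      also have "\<dots> = (\<Sum>t\<in>{j}. \<sigma> t * f (X t) - \<sigma> t * f (Y t))"
        by (rule sum.mono_neutral_right) (use assms in auto)
      also have "\<dots> \<le> 1"
      proof -
        have "\<sigma> j = 1 \<or> \<sigma> j = -1" using Sig_val[OF s assms(2)] .
        then show ?thesis using F01_bounds[OF f, of "X j"] F01_bounds[OF f, of "Y j"] by auto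
      qed
      finally have "RT m \<sigma> X f \<le> RT m \<sigma> Y f + 1 / real m"
        unfolding RT_def using assms(1) by (simp add: field_simps)
      also have "RT m \<sigma> Y f \<le> (SUP f\<in>F01. RT m \<sigma> Y f)"
        by (rule cSUP_upper[OF f RT_bdd[OF s assms(1)]])
      finally show "RT m \<sigma> X f \<le> (SUP f\<in>F01. RT m \<sigma> Y f) + 1 / real m" by simp
    qed
    then show ?thesis by simp
  qed
  have "emp_rademacher m X - emp_rademacher m Y = (1 / 2 ^ m) * (\<Sum>\<sigma>\<in>Sig m. (SUP f\<in>F01. RT m \<sigma> X f) - (SUP f\<in>F01. RT m \<sigma> Y f))"
    unfolding rad_def' by (simp add: sum_subtractf right_diff_distrib)
  also have "\<dots> \<le> (1 / 2 ^ m) * (\<Sum>\<sigma>\<in>Sig m. 1 / real m)"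
    by (rule mult_left_mono[OF sum_mono]) (use one in auto)
  also have "\<dots> = 1 / real m" by (simp add: card_Sig)
  finally show ?thesis .
qed




definition php :: "nat pmf \<Rightarrow> (nat \<Rightarrow> real) \<Rightarrow> nat \<Rightarrow> real" where
  "php \<mu> f x = f x - measure_pmf.expectation \<mu> f"
definition phm :: "nat pmf \<Rightarrow> (nat \<Rightarrow> real) \<Rightarrow> nat \<Rightarrow> real" where
  "phm \<mu> f x = measure_pmf.expectation \<mu> f - f x"

lemma php_abs: "f \<in> F01 \<Longrightarrow> \<bar>php \<mu> f x\<bar> \<le> 1"
  using F01_bounds[of f x] Pf_bounds(3,4)[of f "{}" \<mu>] by (auto simp: php_def abs_le_iff)
lemma phm_abs: "f \<in> F01 \<Longrightarrow> \<bar>phm \<mu> f x\<bar> \<le> 1"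
  using F01_bounds[of f x] Pf_bounds(3,4)[of f "{}" \<mu>] by (auto simp: phm_def abs_le_iff)

lemma F01_int: "f \<in> F01 \<Longrightarrow> integrable (measure_pmf \<mu>) f"
  by (rule integrable_bounded_pmf[where B=1]) (use F01_bounds in \<open>force simp: abs_le_iff\<close>)

lemma php_E0: "f \<in> F01 \<Longrightarrow> measure_pmf.expectation \<mu> (php \<mu> f) = 0"
  unfolding php_def by (subst Bochner_Integration.integral_diff) (auto intro: F01_int)
lemma phm_E0: "f \<in> F01 \<Longrightarrow> measure_pmf.expectation \<mu> (phm \<mu> f) = 0"
  unfolding phm_def by (subst Bochner_Integration.integral_diff) (auto intro: F01_int)

lemma Phi_le_bdd: "f \<in> F01 \<Longrightarrow> (\<And>f x. f \<in> F01 \<Longrightarrow> \<bar>\<phi> f x\<bar> \<le> 1) \<Longrightarrow>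
    (\<Sum>t\<in>S. \<phi> f (X t)) \<le> Phi F01 (\<lambda>_. 0) \<phi> S X"
proof -
  assume f: "f \<in> F01" and ph: "\<And>f x. f \<in> F01 \<Longrightarrow> \<bar>\<phi> f x\<bar> \<le> 1"
  have bd: "bdd_above ((\<lambda>f. (\<lambda>_. 0::real) f + (\<Sum>t\<in>S. \<phi> f (X t))) ` F01)"
    by (rule Phi_bdd_above[where K=0]) (use ph in auto)
  have "(\<lambda>_. 0::real) f + (\<Sum>t\<in>S. \<phi> f (X t)) \<le> (SUP f\<in>F01. (\<lambda>_. 0::real) f + (\<Sum>t\<in>S. \<phi> f (X t)))"
    by (rule cSUP_upper[OF f bd])
  then show ?thesis unfolding Phi_def by simp
qed

lemma sup_decomp:
  assumes s: "\<sigma> \<in> Sig m" and m: "m \<ge> 1"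
  defines "P \<equiv> {t \<in> {..<m}. \<sigma> t = 1}" and "N \<equiv> {t \<in> {..<m}. \<sigma> t = -1}"
  shows "(SUP f\<in>F01. RT m \<sigma> X f) \<le> (1 / real m) * (Phi F01 (\<lambda>_. 0) (php \<mu>) P X + Phi F01 (\<lambda>_. 0) (phm \<mu>) N X + \<bar>\<Sum>t<m. \<sigma> t\<bar>)"
proof (rule cSUP_least[OF F01_ne])
  fix f assume f: "f \<in> F01"
  define Pf where "Pf = measure_pmf.expectation \<mu> f"
  have Pf: "0 \<le> Pf" "Pf \<le> 1" using Pf_bounds(3,4)[OF f, of "{}" \<mu>] by (auto simp: Pf_def)
  have un: "{..<m} = P \<union> N" using Sig_val[OF s] by (auto simp: P_def N_def)
  have dis: "P \<inter> N = {}" by (auto simp: P_def N_def)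
  have fin: "finite P" "finite N" by (auto simp: P_def N_def)
  have "(\<Sum>t<m. \<sigma> t * f (X t)) = (\<Sum>t\<in>P. \<sigma> t * f (X t)) + (\<Sum>t\<in>N. \<sigma> t * f (X t))"
    unfolding un by (rule sum.union_disjoint[OF fin dis])
  also have "\<dots> = (\<Sum>t\<in>P. f (X t)) - (\<Sum>t\<in>N. f (X t))"
    by (simp add: P_def N_def sum_negf)
  also have "\<dots> = (\<Sum>t\<in>P. php \<mu> f (X t)) + (\<Sum>t\<in>N. phm \<mu> f (X t)) + Pf * (real (card P) - real (card N))"
    by (simp add: php_def phm_def Pf_def sum_subtractf algebra_simps)
  also have "Pf * (real (card P) - real (card N)) \<le> \<bar>\<Sum>t<m. \<sigma> t\<bar>"
  proof -
    have "(\<Sum>t<m. \<sigma> t) = (\<Sum>t\<in>P. \<sigma> t) + (\<Sum>t\<in>N. \<sigma> t)"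
      unfolding un by (rule sum.union_disjoint[OF fin dis])
    also have "\<dots> = real (card P) - real (card N)"
      by (simp add: P_def N_def)
    finally have e: "(\<Sum>t<m. \<sigma> t) = real (card P) - real (card N)" .
    have "Pf * (real (card P) - real (card N)) \<le> Pf * \<bar>real (card P) - real (card N)\<bar>"
      using Pf by (intro mult_left_mono) auto
    also have "\<dots> \<le> \<bar>real (card P) - real (card N)\<bar>" using Pf by (simp add: mult_left_le_one_le)
    finally show ?thesis using e by simp
  qed
  also have "(\<Sum>t\<in>P. php \<mu> f (X t)) \<le> Phi F01 (\<lambda>_. 0) (php \<mu>) P X"
    by (rule Phi_le_bdd[OF f]) (rule php_abs)
  also have "(\<Sum>t\<in>N. phm \<mu> f (X t)) \<le> Phi F01 (\<lambda>_. 0) (phm \<mu>) N X"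
    by (rule Phi_le_bdd[OF f]) (rule phm_abs)
  finally have "(\<Sum>t<m. \<sigma> t * f (X t)) \<le> Phi F01 (\<lambda>_. 0) (php \<mu>) P X + Phi F01 (\<lambda>_. 0) (phm \<mu>) N X + \<bar>\<Sum>t<m. \<sigma> t\<bar>"
    by simp
  then show "RT m \<sigma> X f \<le> (1 / real m) * (Phi F01 (\<lambda>_. 0) (php \<mu>) P X + Phi F01 (\<lambda>_. 0) (phm \<mu>) N X + \<bar>\<Sum>t<m. \<sigma> t\<bar>)"
    unfolding RT_def using m by (intro mult_left_mono) auto
qed

lemma Phi_all_php: "m \<ge> 1 \<Longrightarrow> Phi F01 (\<lambda>_. 0) (php \<mu>) {..<m} X \<le> real m * tv_dist (emp_dist m X) (pmf \<mu>)"
  unfolding Phi_def by (rule cSUP_least[OF F01_ne]) (use tv_plus in \<open>auto simp: php_def\<close>)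
lemma Phi_all_phm: "m \<ge> 1 \<Longrightarrow> Phi F01 (\<lambda>_. 0) (phm \<mu>) {..<m} X \<le> real m * tv_dist (emp_dist m X) (pmf \<mu>)"
  unfolding Phi_def by (rule cSUP_least[OF F01_ne]) (use tv_minus in \<open>auto simp: phm_def\<close>)




lemma E_rad:
  fixes \<mu> :: "nat pmf"
  assumes m: "m \<ge> 1"
  shows "measure_pmf.expectation (sample_pmf m \<mu>) (emp_rademacher m)
     \<le> 2 * measure_pmf.expectation (sample_pmf m \<mu>) (\<lambda>X. tv_dist (emp_dist m X) (pmf \<mu>)) + 1 / sqrt (real m)"
proof -
  let ?M = "sample_pmf m \<mu>"
  let ?TV = "\<lambda>X. tv_dist (emp_dist m X) (pmf \<mu>)"
  define Pp where "Pp \<sigma> = {t \<in> {..<m}. \<sigma> t = (1::real)}" for \<sigma> :: "nat \<Rightarrow> real"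
  define Nn where "Nn \<sigma> = {t \<in> {..<m}. \<sigma> t = (-1::real)}" for \<sigma> :: "nat \<Rightarrow> real"
  define A where "A \<sigma> X = Phi F01 (\<lambda>_. 0) (php \<mu>) (Pp \<sigma>) X" for \<sigma> X
  define B where "B \<sigma> X = Phi F01 (\<lambda>_. 0) (phm \<mu>) (Nn \<sigma>) X" for \<sigma> X
  define c where "c \<sigma> = \<bar>\<Sum>t<m. \<sigma> t\<bar>" for \<sigma> :: "nat \<Rightarrow> real"
  have PhiB: "\<bar>Phi F01 (\<lambda>_. 0) \<phi> S X\<bar> \<le> real (card S)" if "\<And>f x. f \<in> F01 \<Longrightarrow> \<bar>\<phi> f x\<bar> \<le> 1" for \<phi> S X
    using Phi_bound[OF F01_ne, of "\<lambda>_. 0" 0 \<phi> S X] that by simp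
  have intA: "integrable ?M (A \<sigma>)" for \<sigma>
    unfolding A_def by (rule integrable_bounded_pmf, rule PhiB, rule php_abs)
  have intB: "integrable ?M (B \<sigma>)" for \<sigma>
    unfolding B_def by (rule integrable_bounded_pmf, rule PhiB, rule phm_abs)
  have intTV: "integrable ?M ?TV"
    by (rule integrable_bounded_pmf[where B=1]) (use tv_bounds[OF m] in \<open>force simp: abs_le_iff\<close>)
  define U where "U X = (1 / 2 ^ m) * (\<Sum>\<sigma>\<in>Sig m. (1 / real m) * (A \<sigma> X + B \<sigma> X + c \<sigma>))" for X
  have intU: "integrable ?M U"
    unfolding U_def by (intro integrable_mult_right Bochner_Integration.integrable_sum Bochner_Integration.integrable_add intA intB) simp
  have RU: "emp_rademacher m X \<le> U X" for X
    unfolding rad_def' U_def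
  proof (rule mult_left_mono[OF sum_mono])
    fix \<sigma> assume s: "\<sigma> \<in> Sig m"
    show "(SUP f\<in>F01. RT m \<sigma> X f) \<le> (1 / real m) * (A \<sigma> X + B \<sigma> X + c \<sigma>)"
      unfolding A_def B_def c_def Pp_def Nn_def by (rule sup_decomp[OF s m])
  qed simp
  have "measure_pmf.expectation ?M (emp_rademacher m) \<le> measure_pmf.expectation ?M U"
  proof (rule integral_mono[OF _ intU RU])
    show "integrable ?M (emp_rademacher m)"
      by (rule integrable_bounded_pmf[where B=1]) (use rad_bounds[OF m] in \<open>force simp: abs_le_iff\<close>)
  qed
  also have "measure_pmf.expectation ?M U = (1 / 2 ^ m) * (\<Sum>\<sigma>\<in>Sig m. (1 / real m) *
      (measure_pmf.expectation ?M (A \<sigma>) + measure_pmf.expectation ?M (B \<sigma>) + c \<sigma>))"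
    unfolding U_def
    by (simp add: Bochner_Integration.integral_sum Bochner_Integration.integral_add intA intB
                  Bochner_Integration.integrable_add)
  also have "\<dots> \<le> (1 / 2 ^ m) * (\<Sum>\<sigma>\<in>Sig m. (1 / real m) *
      (2 * real m * measure_pmf.expectation ?M ?TV + c \<sigma>))"
  proof (rule mult_left_mono[OF sum_mono])
    fix \<sigma> assume s: "\<sigma> \<in> Sig m"
    have PA: "Pp \<sigma> \<subseteq> {..<m}" "Nn \<sigma> \<subseteq> {..<m}" by (auto simp: Pp_def Nn_def)
    have "measure_pmf.expectation ?M (A \<sigma>) \<le> measure_pmf.expectation ?M (Phi F01 (\<lambda>_. 0) (php \<mu>) {..<m})"
      unfolding A_def sample_pmf_def
      by (rule Phi_jensen[OF F01_ne php_abs php_E0 finite_lessThan PA(1)]) auto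
    also have "\<dots> \<le> measure_pmf.expectation ?M (\<lambda>X. real m * ?TV X)"
      by (rule integral_mono) (auto intro: integrable_bounded_pmf PhiB php_abs intTV Phi_all_php[OF m])
    finally have EA: "measure_pmf.expectation ?M (A \<sigma>) \<le> real m * measure_pmf.expectation ?M ?TV" by simp
    have "measure_pmf.expectation ?M (B \<sigma>) \<le> measure_pmf.expectation ?M (Phi F01 (\<lambda>_. 0) (phm \<mu>) {..<m})"
      unfolding B_def sample_pmf_def
      by (rule Phi_jensen[OF F01_ne phm_abs phm_E0 finite_lessThan PA(2)]) auto
    also have "\<dots> \<le> measure_pmf.expectation ?M (\<lambda>X. real m * ?TV X)"
      by (rule integral_mono) (auto intro: integrable_bounded_pmf PhiB phm_abs intTV Phi_all_phm[OF m])
    finally have EB: "measure_pmf.expectation ?M (B \<sigma>) \<le> real m * measure_pmf.expectation ?M ?TV" by simp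
    show "(1 / real m) * (measure_pmf.expectation ?M (A \<sigma>) + measure_pmf.expectation ?M (B \<sigma>) + c \<sigma>)
       \<le> (1 / real m) * (2 * real m * measure_pmf.expectation ?M ?TV + c \<sigma>)"
      using EA EB by (intro mult_left_mono) auto
  qed simp
  also have "\<dots> = 2 * measure_pmf.expectation ?M ?TV + (1 / 2 ^ m) * (1 / real m) * (\<Sum>\<sigma>\<in>Sig m. c \<sigma>)"
  proof -
    define E where "E = measure_pmf.expectation ?M ?TV"
    have e1: "(1/real m)*(2*real m*E + c \<sigma>) = 2*E + (1/real m)*c \<sigma>" for \<sigma> using m by (simp add: field_simps)
    have "(\<Sum>\<sigma>\<in>Sig m. (1/real m)*(2*real m*E + c \<sigma>)) = (\<Sum>\<sigma>\<in>Sig m. 2*E) + (1/real m) * (\<Sum>\<sigma>\<in>Sig m. c \<sigma>)"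
      by (simp only: e1 sum.distrib sum_distrib_left)
    also have "\<dots> = 2 ^ m * (2 * E) + (1/real m) * (\<Sum>\<sigma>\<in>Sig m. c \<sigma>)" by (simp add: card_Sig)
    finally have "(1 / 2 ^ m) * (\<Sum>\<sigma>\<in>Sig m. (1/real m)*(2*real m*E + c \<sigma>)) = 2 * E + (1 / 2 ^ m) * (1 / real m) * (\<Sum>\<sigma>\<in>Sig m. c \<sigma>)"
      by (simp add: field_simps)
    then show ?thesis by (simp add: E_def)
  qed
  also have "\<dots> \<le> 2 * measure_pmf.expectation ?M ?TV + (1 / 2 ^ m) * (1 / real m) * (sqrt (real m) * 2 ^ m)"
    unfolding c_def using sum_abs_Sig[OF m] by (intro add_left_mono mult_left_mono) auto
  also have "(1 / 2 ^ m) * (1 / real m) * (sqrt (real m) * 2 ^ m) = 1 / sqrt (real m)"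
  proof -
    have "real m = sqrt (real m) * sqrt (real m)" by simp
    then show ?thesis using m by (simp add: field_simps)
  qed
  finally show ?thesis .
qed




theorem lemma3:
  fixes m :: nat and \<delta> :: real and \<mu> :: "nat pmf"
  assumes "m \<ge> 1"
    and "0 < \<delta>" and "\<delta> < 1"
    and "set_pmf \<mu> \<subseteq> {1..}"
  shows "measure_pmf.prob (sample_pmf m \<mu>)
           {X. tv_dist (emp_dist m X) (pmf \<mu>)
                 \<ge> (1/2) * emp_rademacher m X - 3 * sqrt (ln (2 / \<delta>) / real m)}
         \<ge> 1 - \<delta>"
proof -
  have m: "m \<ge> 1" by (rule assms(1))
  let ?M = "sample_pmf m \<mu>"
  define TV where "TV X = tv_dist (emp_dist m X) (pmf \<mu>)" for X
  define R where "R X = emp_rademacher m X" for X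
  define g where "g X = TV X - R X / 2" for X
  have mpos: "real m > 0" using m by simp
  have gB: "\<bar>g X\<bar> \<le> 2" for X
    using tv_bounds[OF m, of X \<mu>] rad_bounds[OF m, of X] by (simp add: g_def TV_def R_def abs_le_iff)
  have gd: "bdd_diff {..<m} (3 / (2 * real m)) g"
    unfolding bdd_diff_def
  proof (intro allI impI)
    fix x y :: "nat \<Rightarrow> nat" and j assume j: "j \<in> {..<m}" and xy: "\<forall>k. k \<noteq> j \<longrightarrow> x k = y k"
    have xy': "\<And>k. k \<noteq> j \<Longrightarrow> x k = y k" using xy by auto
    have yx': "\<And>k. k \<noteq> j \<Longrightarrow> y k = x k" using xy by auto
    have "TV x - TV y \<le> 1 / real m" "TV y - TV x \<le> 1 / real m"
      unfolding TV_def using tv_diff[OF m _ xy'] tv_diff[OF m _ yx'] j by auto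
    moreover have "R x - R y \<le> 1 / real m" "R y - R x \<le> 1 / real m"
      unfolding R_def using rad_diff[OF m _ xy'] rad_diff[OF m _ yx'] j by auto
    moreover have "3 / (2 * real m) = 1 / real m + (1 / real m) / 2" using mpos by (simp add: field_simps)
    ultimately show "\<bar>g x - g y\<bar> \<le> 3 / (2 * real m)" unfolding g_def by (simp add: abs_le_iff)
  qed
  have Eg: "measure_pmf.expectation ?M g \<ge> - 1 / (2 * sqrt (real m))"
  proof -
    have intTV: "integrable ?M TV"
      by (rule integrable_bounded_pmf[where B=1]) (use tv_bounds[OF m] in \<open>force simp: abs_le_iff TV_def\<close>)
    have intR: "integrable ?M R"
      by (rule integrable_bounded_pmf[where B=1]) (use rad_bounds[OF m] in \<open>force simp: abs_le_iff R_def\<close>)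
    have "measure_pmf.expectation ?M g = measure_pmf.expectation ?M TV - measure_pmf.expectation ?M R / 2"
      unfolding g_def using intTV intR by simp
    moreover have "measure_pmf.expectation ?M R \<le> 2 * measure_pmf.expectation ?M TV + 1 / sqrt (real m)"
      using E_rad[OF m, of \<mu>] unfolding R_def TV_def by (simp add: R_def[abs_def])
    ultimately show ?thesis by simp
  qed
  define L where "L = ln (2 / \<delta>)"
  have L23: "L \<ge> 2/3"
  proof -
    have "ln 2 \<le> ln (2 / \<delta>)" using assms(2,3) by (subst ln_le_cancel_iff) (auto simp: field_simps)
    then show ?thesis using ln2_ge_two_thirds by (simp add: L_def)
  qed
  define sL where "sL = sqrt L"
  have sL: "sL \<ge> 1/2" 
  proof -
    have "sqrt (1/4) \<le> sqrt L" using L23 by (subst real_sqrt_le_iff) simp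
    moreover have "sqrt (1/4::real) = 1/2" by (simp add: real_sqrt_divide)
    ultimately show ?thesis by (simp add: sL_def)
  qed
  define sm where "sm = sqrt (real m)"
  have sm: "sm > 0" using mpos by (simp add: sm_def)
  have eps: "3 * sqrt (L / real m) = 3 * sL / sm" by (simp add: sL_def sm_def real_sqrt_divide)
  define t where "t = (3 * sL - 1/2) / sm"
  have t: "t > 0" using sL sm by (simp add: t_def)
  have bad: "{X. \<not> (TV X \<ge> (1/2) * R X - 3 * sqrt (L / real m))} \<subseteq> {X. g X \<le> measure_pmf.expectation ?M g - t}"
  proof safe
    fix X assume "\<not> (TV X \<ge> (1/2) * R X - 3 * sqrt (L / real m))"
    then have "g X < - (3 * sL / sm)" unfolding g_def eps by simp
    also have "- (3 * sL / sm) = - 1 / (2 * sm) - t" using sm by (simp add: t_def field_simps)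
    also have "\<dots> \<le> measure_pmf.expectation ?M g - t" using Eg by (simp add: sm_def)
    finally show "g X \<le> measure_pmf.expectation ?M g - t" by simp
  qed
  have pb: "measure_pmf.prob ?M {X. g X \<le> measure_pmf.expectation ?M g - t}
      \<le> exp (- 2 * t\<^sup>2 / (real (card {..<m}) * (3 / (2 * real m))\<^sup>2))"
    unfolding sample_pmf_def
    by (rule mcdiarmid_lower[OF finite_lessThan _ gd[unfolded sample_pmf_def] _ gB t]) (use m mpos in auto)
  also have "- 2 * t\<^sup>2 / (real (card {..<m}) * (3 / (2 * real m))\<^sup>2) = - 8 * (3 * sL - 1/2)\<^sup>2 / 9"
  proof -
    have e: "real m = sm * sm" using mpos by (simp add: sm_def)
    show ?thesis using sm by (simp add: e t_def field_simps power2_eq_square)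
  qed
  also have "\<dots> \<le> - L"
  proof -
    have "(3 * sL - 1/2) \<ge> 2 * sL" using sL by simp
    then have "(3 * sL - 1/2)\<^sup>2 \<ge> (2 * sL)\<^sup>2" using sL by (intro power_mono) auto
    moreover have "(2 * sL)\<^sup>2 = 4 * L" using L23 by (simp add: sL_def power_mult_distrib)
    ultimately show ?thesis using L23 by simp
  qed
  finally have pb2: "measure_pmf.prob ?M {X. g X \<le> measure_pmf.expectation ?M g - t} \<le> exp (- L)" by simp
  have "exp (- L) = \<delta> / 2" using assms(2) by (simp add: L_def exp_minus exp_ln)
  with pb2 have pbad: "measure_pmf.prob ?M {X. \<not> (TV X \<ge> (1/2) * R X - 3 * sqrt (L / real m))} \<le> \<delta>"
  proof -
    have "measure_pmf.prob ?M {X. \<not> (TV X \<ge> (1/2) * R X - 3 * sqrt (L / real m))}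
        \<le> measure_pmf.prob ?M {X. g X \<le> measure_pmf.expectation ?M g - t}"
      by (rule measure_pmf.finite_measure_mono[OF bad]) simp
    then show ?thesis using pb2 \<open>exp (- L) = \<delta> / 2\<close> assms(2) by simp
  qed
  have "measure_pmf.prob ?M {X. TV X \<ge> (1/2) * R X - 3 * sqrt (L / real m)}
      = 1 - measure_pmf.prob ?M {X. \<not> (TV X \<ge> (1/2) * R X - 3 * sqrt (L / real m))}"
    using measure_pmf.prob_compl[of "{X. \<not> (TV X \<ge> (1/2) * R X - 3 * sqrt (L / real m))}" ?M]
    by (simp add: Compl_eq_Diff_UNIV[symmetric] Collect_neg_eq[symmetric])
  with pbad show ?thesis by (simp add: TV_def R_def L_def)
qed


end
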